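(* Let $D=\{z\in\mathbb C^2:\ |z_2|^2+x_1^2+y_1^4<1\}$ with defining function $\rho$, and fix $\zeta\in bD$. Choose coordinates $w=(w_1,w_2)$, $w_j=u_j+iv_j$, obtained from the standard coordinates of $\mathbb C^2$ by a translation and a unitary linear transformation, such that $\zeta=(0,0)$ and $\frac{\partial\rho}{\partial v_2}(\zeta)=|\nabla\rho(\zeta)|$, $\frac{\partial\rho}{\partial u_1}(\zeta)=\frac{\partial\rho}{\partial v_1}(\zeta)=\frac{\partial\rho}{\partial u_2}(\zeta)=0$, so that near $\zeta$ the boundary $bD$ is a graph $v_2=\Phi(u_1,v_1,u_2)$ with $\Phi$ smooth, $\Phi(0,0,0)=0$, $\nabla\Phi(0,0,0)=0$; regard points $w\in bD$ near $\zeta$ as functions of the parameters $(u_1,v_1,u_2)$. Then, for $\delta>0$ sufficiently small, $$\frac{\partial\Delta}{\partial u_2}(w,z)\neq0\quad\text{whenever } w\in bD,\ |w-\zeta|<\delta,\ \text{and } |z-\zeta|<\delta.$$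
   Context: Here $\rho(w)=|w_2|^2+u_1^2+v_1^4-1$ in the original coordinates, and $\Delta(w,z)=\langle\partial\rho(w),w-z\rangle=\sum_{j=1}^2\frac{\partial\rho}{\partial w_j}(w)(w_j-z_j)$; the derivative $\partial/\partial u_2$ is taken with respect to the graph parameter $u_2$ of $w\in bD$, with $z$ fixed. *)

theory Defs
  imports "HOL-Analysis.Analysis"
begin

text \<open>Points of C^2 are pairs (z1, z2); the norm on complex \<times> complex is the Euclidean one.\<close>

definition rho :: "complex \<times> complex \<Rightarrow> real" where
  "rho z = (cmod (snd z))^2 + (Re (fst z))^2 + (Im (fst z))^4 - 1"

definition Dom :: "(complex \<times> complex) set" where
  "Dom = {z. rho z < 0}"

text \<open>Delta(w,z) = sum_j (d rho / d w_j)(w) (w_j - z_j), with the Wirtinger derivatives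
  d rho/d w1 = u1 - 2 i v1^3 and d rho / d w2 = conj w2 computed in the original coordinates.\<close>
definition Delta :: "complex \<times> complex \<Rightarrow> complex \<times> complex \<Rightarrow> complex" where
  "Delta w z = (complex_of_real (Re (fst w)) - 2 * \<i> * complex_of_real ((Im (fst w))^3)) * (fst w - fst z)
              + cnj (snd w) * (snd w - snd z)"

definition unitary2 :: "complex \<Rightarrow> complex \<Rightarrow> complex \<Rightarrow> complex \<Rightarrow> bool" where
  "unitary2 a b c d \<longleftrightarrow>
     cnj a * a + cnj c * c = 1 \<and> cnj b * b + cnj d * d = 1 \<and> cnj a * b + cnj c * d = 0"

text \<open>New coordinates w = U (z - zeta) with U = [[a,b],[c,d]] unitary; this is the inverse map,
  sending new coordinates w to the original point zeta + U^* w.\<close>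
definition Tinv :: "complex \<times> complex \<Rightarrow> complex \<Rightarrow> complex \<Rightarrow> complex \<Rightarrow> complex
                      \<Rightarrow> complex \<times> complex \<Rightarrow> complex \<times> complex" where
  "Tinv \<zeta> a b c d w =
     (fst \<zeta> + cnj a * fst w + cnj c * snd w, snd \<zeta> + cnj b * fst w + cnj d * snd w)"

definition graph_pt :: "complex \<times> complex \<Rightarrow> complex \<Rightarrow> complex \<Rightarrow> complex \<Rightarrow> complex
                      \<Rightarrow> (real \<times> real \<times> real \<Rightarrow> real) \<Rightarrow> real \<times> real \<times> real \<Rightarrow> complex \<times> complex" where
  "graph_pt \<zeta> a b c d \<Phi> p =
     (case p of (u1, v1, u2) \<Rightarrow> Tinv \<zeta> a b c d (Complex u1 v1, Complex u2 (\<Phi> p)))"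

fun Ck_on :: "nat \<Rightarrow> ('a::real_normed_vector \<Rightarrow> real) \<Rightarrow> 'a set \<Rightarrow> bool" where
  "Ck_on 0 f N = continuous_on N f"
| "Ck_on (Suc k) f N =
     (\<exists>f'. (\<forall>p\<in>N. (f has_derivative f' p) (at p)) \<and> (\<forall>h. Ck_on k (\<lambda>p. f' p h) N))"

definition smooth_on :: "('a::real_normed_vector \<Rightarrow> real) \<Rightarrow> 'a set \<Rightarrow> bool" where
  "smooth_on f N \<longleftrightarrow> (\<forall>k. Ck_on k f N)"

end

theory Submission
  imports Defs
begin


definition drho :: "complex \<times> complex \<Rightarrow> complex \<times> complex \<Rightarrow> real" where
  "drho q h = 2*Re(fst q)*Re(fst h) + 4*Im(fst q)^3*Im(fst h) + 2*Re(snd q)*Re(snd h) + 2*Im(snd q)*Im(snd h)"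

definition Lm :: "complex \<Rightarrow> complex \<Rightarrow> complex \<Rightarrow> complex \<Rightarrow> complex \<times> complex \<Rightarrow> complex \<times> complex" where
  "Lm a b c d k = (cnj a * fst k + cnj c * snd k, cnj b * fst k + cnj d * snd k)"

lemma rho_T_deriv:
  "((\<lambda>w. rho (Tinv \<zeta> a b c d w)) has_derivative (\<lambda>h. drho \<zeta> (Lm a b c d h))) (at (0,0))"
proof -
  have e: "(\<lambda>w. rho (Tinv \<zeta> a b c d w)) = (\<lambda>w. (Re (snd \<zeta> + cnj b * fst w + cnj d * snd w))^2
     + (Im (snd \<zeta> + cnj b * fst w + cnj d * snd w))^2 + (Re (fst \<zeta> + cnj a * fst w + cnj c * snd w))^2
     + (Im (fst \<zeta> + cnj a * fst w + cnj c * snd w))^4 - 1)"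
    by (simp add: fun_eq_iff rho_def Tinv_def cmod_power2)
  show ?thesis unfolding e
    apply (rule derivative_eq_intros refl)+
    apply (simp add: fun_eq_iff drho_def Lm_def algebra_simps)
    done
qed

lemma drho_lin: "drho q (Lm a b c d h) = Re (fst h) * drho q (Lm a b c d (1,0)) + Im (fst h) * drho q (Lm a b c d (\<i>,0))
   + Re (snd h) * drho q (Lm a b c d (0,1)) + Im (snd h) * drho q (Lm a b c d (0,\<i>))"
  by (simp add: drho_def Lm_def algebra_simps)

lemma Lm_U: assumes "unitary2 a b c d"
  shows "Lm a b c d (a * fst k + b * snd k, c * fst k + d * snd k) = k"
proof -
  from assms have 1: "cnj a * a + cnj c * c = 1" "cnj b * b + cnj d * d = 1" "cnj a * b + cnj c * d = 0"
    by (auto simp: unitary2_def)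
  have 2: "cnj b * a + cnj d * c = 0" using arg_cong[OF 1(3), of cnj] by (simp add: mult.commute)
  have "cnj a * (a * fst k + b * snd k) + cnj c * (c * fst k + d * snd k) = (cnj a * a + cnj c * c) * fst k + (cnj a * b + cnj c * d) * snd k"
    by (simp add: algebra_simps)
  moreover have "cnj b * (a * fst k + b * snd k) + cnj d * (c * fst k + d * snd k) = (cnj b * a + cnj d * c) * fst k + (cnj b * b + cnj d * d) * snd k"
    by (simp add: algebra_simps)
  ultimately show ?thesis using 1 2 by (simp add: Lm_def)
qed



definition DD :: "complex \<times> complex \<Rightarrow> complex \<times> complex \<Rightarrow> complex \<times> complex \<Rightarrow> complex" where
  "DD w v z = (complex_of_real (Re (fst v)) - 2 * \<i> * complex_of_real (3 * (Im (fst w))^2 * Im (fst v))) * (fst w - fst z)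
     + (complex_of_real (Re (fst w)) - 2 * \<i> * complex_of_real ((Im (fst w))^3)) * fst v
     + cnj (snd v) * (snd w - snd z) + cnj (snd w) * snd v"

lemma Delta_deriv:
  fixes g1 g2 :: "real \<Rightarrow> complex"
  assumes "(g1 has_vector_derivative g1') (at t)" "(g2 has_vector_derivative g2') (at t)"
  shows "((\<lambda>t. Delta (g1 t, g2 t) z) has_vector_derivative DD (g1 t, g2 t) (g1', g2') z) (at t)"
  unfolding Delta_def fst_conv snd_conv
  apply (rule derivative_eq_intros assms refl)+
  apply (simp add: DD_def algebra_simps)
  done

lemma Phi_deriv:
  fixes \<Phi> :: "real \<times> real \<times> real \<Rightarrow> real"
  assumes "(\<Phi> has_derivative f') (at (u1,v1,u2))"
  shows "((\<lambda>t. \<Phi> (u1,v1,t)) has_field_derivative f' (0,0,1)) (at u2)"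
proof -
  have l: "linear f'" using assms has_derivative_linear by blast
  have "((\<lambda>t. (u1,v1,t)) has_derivative (\<lambda>s. (0,0,s))) (at u2)"
    by (rule derivative_eq_intros refl)+
  from has_derivative_compose[OF this] assms
  have "((\<lambda>t. \<Phi> (u1,v1,t)) has_derivative (\<lambda>s. f' (0,0,s))) (at u2)" by blast
  moreover have "(\<lambda>s. f' (0,0,s)) = (*) (f' (0,0,1))"
  proof
    fix s :: real
    show "f' (0,0,s) = f' (0,0,1) * s" using linear_scale[OF l, of s "(0,0,1)"] by (simp add: mult.commute)
  qed
  ultimately show ?thesis by (simp add: has_field_derivative_def)
qed

lemma graph_deriv:
  assumes "((\<lambda>t. \<Phi> (u1,v1,t)) has_field_derivative D) (at u2)"
  shows "((\<lambda>t. Delta (graph_pt \<zeta> a b c d \<Phi> (u1, v1, t)) z) has_vector_derivative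
     DD (graph_pt \<zeta> a b c d \<Phi> (u1, v1, u2)) (cnj c * (1 + \<i> * of_real D), cnj d * (1 + \<i> * of_real D)) z) (at u2)"
proof -
  have g: "graph_pt \<zeta> a b c d \<Phi> (u1, v1, t) = (fst \<zeta> + cnj a * Complex u1 v1 + cnj c * (of_real t + \<i> * of_real (\<Phi> (u1,v1,t))),
     snd \<zeta> + cnj b * Complex u1 v1 + cnj d * (of_real t + \<i> * of_real (\<Phi> (u1,v1,t))))" for t
    by (simp add: graph_pt_def Tinv_def Complex_eq)
  show ?thesis unfolding g
    apply (rule Delta_deriv)
    apply (rule derivative_eq_intros assms refl)+
     apply simp
    apply (rule derivative_eq_intros assms refl)+
    apply simp
    done
qed


lemma cmod_le1: assumes "cnj a * a + cnj c * c = 1" shows "cmod a \<le> 1" "cmod c \<le> 1"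
proof -
  have "complex_of_real ((cmod a)^2) + complex_of_real ((cmod c)^2) = 1"
    unfolding complex_norm_square using assms by (simp add: mult.commute)
  hence "complex_of_real ((cmod a)^2 + (cmod c)^2) = 1" by (simp only: of_real_add)
  hence h: "(cmod a)^2 + (cmod c)^2 = 1" using of_real_eq_1_iff by blast
  show "cmod a \<le> 1" using h by (smt (verit) norm_ge_zero power2_le_imp_le zero_le_power2 one_power2)
  show "cmod c \<le> 1" using h by (smt (verit) norm_ge_zero power2_le_imp_le zero_le_power2 one_power2)
qed

lemma unitary_bound: assumes "unitary2 a b c d"
  shows "cmod k1 \<le> 2 * norm (Lm a b c d (k1,k2))" "cmod k2 \<le> 2 * norm (Lm a b c d (k1,k2))"
proof -
  from assms have 1: "cnj a * a + cnj c * c = 1" "cnj b * b + cnj d * d = 1" "cnj a * b + cnj c * d = 0"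
    by (auto simp: unitary2_def)
  define D' where "D' = cnj a * cnj d - cnj b * cnj c"
  have "cnj D' * D' = (cnj a * a + cnj c * c) * (cnj b * b + cnj d * d) - (cnj a * b + cnj c * d) * (cnj b * a + cnj d * c)"
    unfolding D'_def by (simp add: algebra_simps)
  hence "cnj D' * D' = 1" using 1 by simp
  hence "complex_of_real ((cmod D')^2) = 1" unfolding complex_norm_square by (simp add: mult.commute)
  hence "(cmod D')^2 = 1" using of_real_eq_1_iff by blast
  hence nD: "cmod D' = 1" using norm_ge_zero[of D'] by (auto simp add: power2_eq_1_iff)
  have ba: "cmod a \<le> 1" "cmod c \<le> 1" using cmod_le1[OF 1(1)] by auto
  have bb: "cmod b \<le> 1" "cmod d \<le> 1" using cmod_le1[OF 1(2)] by auto
  define m where "m = Lm a b c d (k1,k2)"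
  have m1: "cmod (fst m) \<le> norm m" "cmod (snd m) \<le> norm m"
    by (metis norm_fst_le prod.collapse) (metis norm_snd_le prod.collapse)
  have e1: "D' * k1 = cnj d * fst m - cnj c * snd m"
    unfolding D'_def m_def Lm_def by (simp add: algebra_simps)
  have e2: "D' * k2 = cnj a * snd m - cnj b * fst m"
    unfolding D'_def m_def Lm_def by (simp add: algebra_simps)
  have "cmod k1 = cmod (D' * k1)" by (simp add: norm_mult nD)
  also have "\<dots> \<le> cmod d * cmod (fst m) + cmod c * cmod (snd m)"
    unfolding e1 by (metis complex_mod_cnj norm_mult norm_triangle_ineq4)
  also have "\<dots> \<le> 1 * norm m + 1 * norm m"
    by (intro add_mono mult_mono) (use ba bb m1 in auto)
  finally show "cmod k1 \<le> 2 * norm (Lm a b c d (k1,k2))" unfolding m_def by simp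
  have "cmod k2 = cmod (D' * k2)" by (simp add: norm_mult nD)
  also have "\<dots> \<le> cmod a * cmod (snd m) + cmod b * cmod (fst m)"
    unfolding e2 by (metis complex_mod_cnj norm_mult norm_triangle_ineq4)
  also have "\<dots> \<le> 1 * norm m + 1 * norm m"
    by (intro add_mono mult_mono) (use ba bb m1 in auto)
  finally show "cmod k2 \<le> 2 * norm (Lm a b c d (k1,k2))" unfolding m_def by simp
qed

lemma DD_cont:
  fixes g1 g2 v1 v2 :: "'a::metric_space \<Rightarrow> complex" and z :: "'a \<Rightarrow> complex \<times> complex"
  assumes "isCont g1 x" "isCont g2 x" "isCont v1 x" "isCont v2 x" "isCont z x"
  shows "isCont (\<lambda>x. DD (g1 x, g2 x) (v1 x, v2 x) (z x)) x"
  unfolding DD_def fst_conv snd_conv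
  by (intro continuous_intros assms continuous_Re continuous_Im)

theorem lemma2p2:
  fixes \<zeta> :: "complex \<times> complex" and a b c d :: complex
    and Dr :: "complex \<times> complex \<Rightarrow> real"
    and \<Phi> :: "real \<times> real \<times> real \<Rightarrow> real" and N :: "(real \<times> real \<times> real) set"
  assumes zeta: "\<zeta> \<in> frontier Dom"
    and U: "unitary2 a b c d"
    and Dr: "((\<lambda>w. rho (Tinv \<zeta> a b c d w)) has_derivative Dr) (at (0, 0))"
    and du1: "Dr (1, 0) = 0" and dv1: "Dr (\<i>, 0) = 0" and du2: "Dr (0, 1) = 0"
    and dv2: "Dr (0, \<i>) = sqrt ((Dr (1, 0))^2 + (Dr (\<i>, 0))^2 + (Dr (0, 1))^2 + (Dr (0, \<i>))^2)"
    and N: "open N" "(0, 0, 0) \<in> N"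
    and smooth: "smooth_on \<Phi> N"
    and Phi0: "\<Phi> (0, 0, 0) = 0"
    and gradPhi0: "(\<Phi> has_derivative (\<lambda>h. 0)) (at (0, 0, 0))"
    and graph1: "\<forall>p\<in>N. graph_pt \<zeta> a b c d \<Phi> p \<in> frontier Dom"
    and graph2: "\<exists>\<epsilon>>0. \<forall>w\<in>frontier Dom. dist w \<zeta> < \<epsilon> \<longrightarrow> (\<exists>p\<in>N. w = graph_pt \<zeta> a b c d \<Phi> p)"
  shows "\<exists>\<delta>>0. \<forall>u1 v1 u2 z. (u1, v1, u2) \<in> N \<and> dist (graph_pt \<zeta> a b c d \<Phi> (u1, v1, u2)) \<zeta> < \<delta>
            \<and> dist z \<zeta> < \<delta> \<longrightarrow>
            (\<exists>D. ((\<lambda>t. Delta (graph_pt \<zeta> a b c d \<Phi> (u1, v1, t)) z) has_vector_derivative D) (at u2)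
                 \<and> D \<noteq> 0)"
  proof -
  obtain f' where f'd: "\<forall>p\<in>N. (\<Phi> has_derivative f' p) (at p)"
    and f'c: "\<forall>h. continuous_on N (\<lambda>p. f' p h)"
    using smooth unfolding smooth_on_def by (metis Ck_on.simps(1) Ck_on.simps(2))
  define \<phi>3 where "\<phi>3 p = f' p (0,0,1)" for p
  have "f' (0,0,0) = (\<lambda>h. 0)" using has_derivative_unique[OF _ gradPhi0] f'd N(2) by blast
  hence \<phi>30: "\<phi>3 (0,0,0) = 0" by (simp add: \<phi>3_def)
  have DrE: "Dr = (\<lambda>h. drho \<zeta> (Lm a b c d h))" using has_derivative_unique[OF Dr rho_T_deriv] .
  have Dri: "Dr (0,\<i>) \<noteq> 0"
  proof
    assume 0: "Dr (0,\<i>) = 0"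
    have "drho \<zeta> (Lm a b c d h) = 0" for h
      using drho_lin[of \<zeta> a b c d h] 0 du1 dv1 du2 unfolding DrE by simp
    hence z: "drho \<zeta> k = 0" for k using Lm_U[OF U, of k] by metis
    have "Re (fst \<zeta>) = 0" using z[of "(1,0)"] by (simp add: drho_def)
    moreover have "Im (fst \<zeta>) = 0" using z[of "(\<i>,0)"] by (simp add: drho_def)
    moreover have "Re (snd \<zeta>) = 0" using z[of "(0,1)"] by (simp add: drho_def)
    moreover have "Im (snd \<zeta>) = 0" using z[of "(0,\<i>)"] by (simp add: drho_def)
    ultimately have "rho \<zeta> < 0" by (simp add: rho_def cmod_power2)
    hence "\<zeta> \<in> Dom" by (simp add: Dom_def)
    moreover have "open Dom" unfolding Dom_def rho_def
      by (intro open_Collect_less continuous_intros)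
    ultimately show False using zeta by (simp add: frontier_def interior_open)
  qed
  define G where "G = DD \<zeta> (cnj c, cnj d) \<zeta>"
  have "G = complex_of_real (Dr (0,1)) / 2 - \<i> * complex_of_real (Dr (0,\<i>)) / 2"
    unfolding G_def DrE by (simp add: DD_def drho_def Lm_def complex_eq_iff algebra_simps)
  hence G0: "G \<noteq> 0" using du2 Dri by (simp add: complex_eq_iff)
  define FF where "FF x = DD (graph_pt \<zeta> a b c d \<Phi> (fst x))
      (cnj c * (1 + \<i> * of_real (\<phi>3 (fst x))), cnj d * (1 + \<i> * of_real (\<phi>3 (fst x)))) (snd x)"
    for x :: "(real \<times> real \<times> real) \<times> (complex \<times> complex)"
  have gp: "graph_pt \<zeta> a b c d \<Phi> p = (fst \<zeta> + cnj a * (of_real (fst p) + \<i> * of_real (fst (snd p)))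
       + cnj c * (of_real (snd (snd p)) + \<i> * of_real (\<Phi> p)),
     snd \<zeta> + cnj b * (of_real (fst p) + \<i> * of_real (fst (snd p)))
       + cnj d * (of_real (snd (snd p)) + \<i> * of_real (\<Phi> p)))" for p
    by (cases p) (simp add: graph_pt_def Tinv_def Complex_eq)
  have FF0: "FF ((0,0,0), \<zeta>) = G"
    unfolding FF_def G_def using Phi0 \<phi>30 by (simp add: gp)
  have c1: "isCont \<Phi> (0,0,0)" using gradPhi0 has_derivative_continuous by blast
  have c2: "isCont \<phi>3 (0,0,0)" unfolding \<phi>3_def
    using f'c N continuous_on_eq_continuous_at by blast
  have c1': "isCont (\<lambda>x. \<Phi> (fst x)) ((0,0,0), \<zeta>)"
    using continuous_at_compose[of "((0,0,0), \<zeta>)" fst \<Phi>] c1 by (simp add: o_def continuous_fst continuous_ident)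
  have c2': "isCont (\<lambda>x. \<phi>3 (fst x)) ((0,0,0), \<zeta>)"
    using continuous_at_compose[of "((0,0,0), \<zeta>)" fst \<phi>3] c2 by (simp add: o_def continuous_fst continuous_ident)
  have cont: "isCont FF ((0,0,0), \<zeta>)"
    unfolding FF_def gp
    by (rule DD_cont; intro continuous_intros c1' c2')
  obtain e where e: "e > 0" "\<forall>y. dist ((0,0,0), \<zeta>) y < e \<longrightarrow> FF y \<noteq> 0"
    using continuous_at_avoid[OF cont] FF0 G0 by metis
  show ?thesis
  proof (intro exI[of _ "e/8"] conjI allI impI)
    show "e/8 > 0" using e by simp
    fix u1 v1 u2 z
    assume H: "(u1, v1, u2) \<in> N \<and> dist (graph_pt \<zeta> a b c d \<Phi> (u1, v1, u2)) \<zeta> < e/8 \<and> dist z \<zeta> < e/8"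
    define p where "p = (u1,v1,u2)"
    have pN: "p \<in> N" using H p_def by simp
    have hd: "((\<lambda>t. \<Phi> (u1,v1,t)) has_field_derivative \<phi>3 p) (at u2)"
      unfolding \<phi>3_def using Phi_deriv f'd pN p_def by blast
    have der: "((\<lambda>t. Delta (graph_pt \<zeta> a b c d \<Phi> (u1, v1, t)) z) has_vector_derivative FF (p, z)) (at u2)"
      using graph_deriv[OF hd] unfolding FF_def p_def by simp
    define k where "k = (Complex u1 v1, Complex u2 (\<Phi> p))"
    have gk: "graph_pt \<zeta> a b c d \<Phi> p - \<zeta> = Lm a b c d k"
      unfolding p_def k_def by (simp add: graph_pt_def Tinv_def Lm_def prod_eq_iff)
    have nm: "norm (Lm a b c d k) < e/8" using H gk by (simp add: p_def dist_norm)
    have b1: "cmod (fst k) \<le> 2 * norm (Lm a b c d k)" "cmod (snd k) \<le> 2 * norm (Lm a b c d k)"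
      by (metis unitary_bound prod.collapse U)+
    have "\<bar>u1\<bar> \<le> cmod (fst k)" "\<bar>v1\<bar> \<le> cmod (fst k)" "\<bar>u2\<bar> \<le> cmod (snd k)"
      unfolding k_def using abs_Re_le_cmod abs_Im_le_cmod by (metis fst_conv snd_conv complex.sel)+
    moreover have "norm p \<le> \<bar>u1\<bar> + \<bar>v1\<bar> + \<bar>u2\<bar>"
    proof -
      have "norm p \<le> norm u1 + norm (v1,u2)" unfolding p_def by (rule norm_Pair_le)
      also have "norm (v1,u2) \<le> norm v1 + norm u2" by (rule norm_Pair_le)
      finally show ?thesis by simp
    qed
    ultimately have np: "norm p < 6 * (e/8)" using b1 nm by linarith
    have "dist ((0,0,0), \<zeta>) (p, z) = norm ((0,0,0) - p, \<zeta> - z)" by (simp add: dist_norm)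
    also have "\<dots> \<le> norm ((0::real,0::real,0::real) - p) + norm (\<zeta> - z)" by (rule norm_Pair_le)
    also have "\<dots> < e"
    proof -
      have z0: "((0::real),(0::real),(0::real)) = 0" by (simp add: zero_prod_def)
      have h1: "norm p < 6 * (e/8)" "norm (\<zeta> - z) < e/8" using np H by (simp_all add: dist_norm norm_minus_commute)
      show ?thesis using h1 e(1) by (simp add: z0 norm_minus_commute; linarith)
    qed
    finally have "FF (p,z) \<noteq> 0" using e by blast
    thus "\<exists>D. ((\<lambda>t. Delta (graph_pt \<zeta> a b c d \<Phi> (u1, v1, t)) z) has_vector_derivative D) (at u2) \<and> D \<noteq> 0"
      using der by blast
  qed
qed

end
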